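(* Let $m$ be a positive integer, $S\subseteq\mathbb{F}_2^m$ and $\epsilon\in(0,1/2)$, and let $d=\dim(S)$. Then $\langle\mathcal{X}_{\overline{S}}^4\rangle\le 2^{2dm+8d^2}\big(1/(\epsilon(1-\epsilon))\big)^{2^d}$.
   Context: For $g:\{0,1\}^{\mathbb{F}_2^m}\to\mathbb{R}$, $\langle g\rangle=\sum_{z}\epsilon^{|z|}(1-\epsilon)^{2^m-|z|}g(z)$, the expectation under the product Bernoulli$(\epsilon)$ measure ($|z|$ is the Hamming weight). For $S\subseteq\mathbb{F}_2^m$, $\mathcal{X}_S(z)=\left(\frac{\epsilon}{1-\epsilon}\right)^{|S|/2}\left(-\frac{1-\epsilon}{\epsilon}\right)^{|\{x\in S:z_x=1\}|}$. $\dim(S)$ is the dimension of the linear span of $S$ in $\mathbb{F}_2^m$. $\overline{S}$ is the set of distinct images $\pi(S)$ of $S$ under invertible linear maps $\pi$ of $\mathbb{F}_2^m$, and $\mathcal{X}_{\overline{S}}=\sum_{S'\in\overline{S}}\mathcal{X}_{S'}$. *)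

theory Defs
  imports "HOL-Analysis.Analysis" "HOL-Library.Z2"
begin

text \<open>F_2^m is modelled as the type bit ^ 'm (m = CARD('m)), a vector space over
  the field bit via the library interpretation vec.  Configurations
  z : F_2^m -> {0,1} are predicates z :: bit^'m => bool (z x = True iff z_x = 1).\<close>

text \<open>Expectation under the product Bernoulli(eps) measure.\<close>
definition bern_expect :: "real \<Rightarrow> ((bit ^ 'm::finite \<Rightarrow> bool) \<Rightarrow> real) \<Rightarrow> real" where
  "bern_expect eps g =
     (\<Sum>z \<in> (UNIV :: (bit ^ 'm \<Rightarrow> bool) set).
        eps ^ card {x. z x} * (1 - eps) ^ (CARD(bit ^ 'm) - card {x. z x}) * g z)"

text \<open>The character X_S.\<close>
definition chi :: "real \<Rightarrow> (bit ^ 'm::finite) set \<Rightarrow> (bit ^ 'm \<Rightarrow> bool) \<Rightarrow> real" where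
  "chi eps S z =
     (eps / (1 - eps)) powr (real (card S) / 2) *
     (- ((1 - eps) / eps)) ^ card {x \<in> S. z x}"

text \<open>The orbit of S under invertible linear maps of F_2^m (set of distinct images).\<close>
definition orbit_GL :: "(bit ^ 'm::finite) set \<Rightarrow> (bit ^ 'm) set set" where
  "orbit_GL S = {\<pi> ` S | \<pi>. Vector_Spaces.linear (*s) (*s) \<pi> \<and> bij \<pi>}"

definition chi_orbit :: "real \<Rightarrow> (bit ^ 'm::finite) set \<Rightarrow> (bit ^ 'm \<Rightarrow> bool) \<Rightarrow> real" where
  "chi_orbit eps S z = (\<Sum>S' \<in> orbit_GL S. chi eps S' z)"

end

theory Submission
  imports Defs
begin

lemma UNIV_bit_eq: "(UNIV :: bit set) = {0, 1}" by (auto intro: bit.exhaust)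

instance bit :: finite
  by standard (simp add: UNIV_bit_eq)

lemma card_bit: "CARD(bit) = 2"
  by (simp add: UNIV_bit_eq)

lemma card_vec_bit: "CARD(bit ^ 'm::finite) = 2 ^ CARD('m)"
  by (simp add: CARD_vec card_bit)

lemma sum_fun_bool_prod:
  fixes f :: "'a::finite \<Rightarrow> bool \<Rightarrow> real"
  shows "(\<Sum>z\<in>(UNIV :: ('a \<Rightarrow> bool) set). \<Prod>x\<in>UNIV. f x (z x)) = (\<Prod>x\<in>UNIV. f x True + f x False)"
proof -
  have "(\<Prod>x\<in>(UNIV::'a set). \<Sum>y\<in>(UNIV::bool set). f x y) = (\<Sum>g\<in>PiE UNIV (\<lambda>_. UNIV). \<Prod>x\<in>UNIV. f x (g x))"
    by (rule prod_sum_PiE) auto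
  moreover have "\<And>x. (\<Sum>y\<in>(UNIV::bool set). f x y) = f x True + f x False"
    by (simp add: UNIV_bool)
  ultimately show ?thesis by (simp add: PiE_UNIV)
qed

definition wt :: "real \<Rightarrow> bool \<Rightarrow> real" where "wt p b = (if b then p else 1 - p)"

lemma weight_prod:
  "eps ^ card {x. z x} * (1 - eps) ^ (CARD('a::finite) - card {x. z x}) = (\<Prod>x\<in>(UNIV::'a set). wt eps (z x))"
proof -
  have "(\<Prod>x\<in>(UNIV::'a set). wt eps (z x)) = (\<Prod>x\<in>UNIV \<inter> {x. z x}. eps) * (\<Prod>x\<in>UNIV \<inter> - {x. z x}. 1 - eps)"
    unfolding wt_def by (rule prod.If_cases) simp
  also have "\<dots> = eps ^ card {x. z x} * (1 - eps) ^ card (- {x. z x})" by simp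
  also have "card (- {x. z x}) = CARD('a) - card {x. z x}"
    by (simp add: Compl_eq_Diff_UNIV card_Diff_subset)
  finally show ?thesis by simp
qed

lemma bern_prod:
  "bern_expect p (\<lambda>z. \<Prod>x\<in>UNIV. G x (z x)) = (\<Prod>x\<in>UNIV. p * G x True + (1 - p) * G x False)"
proof -
  have "bern_expect p (\<lambda>z. \<Prod>x\<in>UNIV. G x (z x)) = (\<Sum>z\<in>UNIV. \<Prod>x\<in>UNIV. wt p (z x) * G x (z x))"
    unfolding bern_expect_def weight_prod by (simp add: prod.distrib)
  also have "\<dots> = (\<Prod>x\<in>UNIV. wt p True * G x True + wt p False * G x False)"
    by (rule sum_fun_bool_prod)
  finally show ?thesis by (simp add: wt_def)
qed

definition phi :: "real \<Rightarrow> bool \<Rightarrow> real" where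
  "phi p b = (if b then - (sqrt (p/(1-p)) * ((1-p)/p)) else sqrt (p/(1-p)))"

lemma chi_prod:
  assumes "0 < p" "p < 1"
  shows "chi p A z = (\<Prod>x\<in>UNIV. if x \<in> A then phi p (z x) else 1)"
proof -
  let ?a = "sqrt (p/(1-p))"
  have a0: "?a > 0" using assms by simp
  have "(p/(1-p)) powr (real (card A) / 2) = ?a ^ card A"
  proof -
    have "?a ^ card A = ?a powr real (card A)" using a0 by (simp add: powr_realpow)
    also have "\<dots> = (?a powr 2) powr (real (card A) / 2)" by (simp add: powr_powr)
    also have "?a powr 2 = p/(1-p)" using a0 assms by (simp add: powr_realpow)
    finally show ?thesis by simp
  qed
  moreover have "(\<Prod>x\<in>UNIV. if x \<in> A then phi p (z x) else 1) = (\<Prod>x\<in>A. phi p (z x))"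
    by (simp add: prod.If_cases Int_def)
  moreover have "(\<Prod>x\<in>A. phi p (z x)) = (\<Prod>x\<in>A. ?a * (if z x then - ((1-p)/p) else 1))"
    by (rule prod.cong) (auto simp: phi_def)
  moreover have "\<dots> = ?a ^ card A * (\<Prod>x\<in>A. (if z x then - ((1-p)/p) else 1))"
    by (simp add: prod.distrib)
  moreover have "(\<Prod>x\<in>A. (if z x then - ((1-p)/p) else 1)) = (- ((1-p)/p)) ^ card {x \<in> A. z x}"
    by (simp add: prod.If_cases Int_def conj_commute)
  ultimately show ?thesis unfolding chi_def by simp
qed

lemma phi_sq:
  assumes "0 < p" "p < 1"
  shows "phi p True ^ 2 = (1-p)/p" "phi p False ^ 2 = p/(1-p)"
proof -
  have a2: "sqrt (p/(1-p)) ^ 2 = p/(1-p)" using assms by simp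
  show "phi p False ^ 2 = p/(1-p)" using a2 by (simp add: phi_def)
  have "phi p True ^ 2 = (sqrt (p/(1-p)) * ((1-p)/p)) ^ 2"
    by (simp add: phi_def)
  also have "\<dots> = sqrt (p/(1-p)) ^ 2 * ((1-p)/p)^2"
    by (rule power_mult_distrib)
  also have "\<dots> = (1-p)/p" using assms a2 by (simp add: power2_eq_square field_simps)
  finally show "phi p True ^ 2 = (1-p)/p" .
qed

lemma phi_mean:
  assumes "0 < p" "p < 1"
  shows "p * phi p True + (1 - p) * phi p False = 0"
  using assms by (simp add: phi_def field_simps)

definition M4 :: "real \<Rightarrow> real" where
  "M4 p = p * phi p True ^ 4 + (1 - p) * phi p False ^ 4"

lemma aux_frac:
  fixes p q :: real
  assumes "0 < p" "0 < q"
  shows "p*(q/p)^2 + q*(p/q)^2 = (q^3+p^3)/(p*q)"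
  using assms by (simp add: field_simps power2_eq_square power3_eq_cube)

lemma M4_bound:
  assumes "0 < p" "p < 1"
  shows "0 \<le> M4 p" "M4 p \<le> 1 / (p * (1 - p))"
proof -
  have e: "M4 p = p * ((1-p)/p)^2 + (1-p) * (p/(1-p))^2"
  proof -
    have "\<And>x::real. x ^ 4 = (x^2)^2" by (simp add: power4_eq_xxxx power2_eq_square)
    then show ?thesis unfolding M4_def using phi_sq[OF assms] by metis
  qed
  show "0 \<le> M4 p" unfolding e using assms by simp
  have "1 - p \<noteq> 0" using assms by simp
  have "p * ((1-p)/p)^2 + (1-p) * (p/(1-p))^2 = ((1-p)^3 + p^3) / (p * (1-p))"
    using aux_frac[of p "1-p"] assms by simp
  also have "\<dots> \<le> 1 / (p * (1-p))"
  proof (rule divide_right_mono)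
    have "(1-p)^3 + p^3 = 1 - 3*p*(1-p)" by (simp add: power3_eq_cube algebra_simps)
    then show "(1-p)^3 + p^3 \<le> 1" using assms by (simp add: mult_nonneg_nonneg)
    show "0 \<le> p * (1-p)" using assms by simp
  qed
  finally show "M4 p \<le> 1 / (p * (1 - p))" unfolding e .
qed

definition psi :: "real \<Rightarrow> ('a set) \<Rightarrow> 'a \<Rightarrow> bool \<Rightarrow> real" where
  "psi p A x b = (if x \<in> A then phi p b else 1)"

lemma E4_eq:
  assumes "0 < p" "p < 1"
  shows "bern_expect p (\<lambda>z. chi p A1 z * chi p A2 z * chi p A3 z * chi p A4 z)
    = (\<Prod>x\<in>UNIV. p * (psi p A1 x True * psi p A2 x True * psi p A3 x True * psi p A4 x True)
          + (1 - p) * (psi p A1 x False * psi p A2 x False * psi p A3 x False * psi p A4 x False))"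
proof -
  have "(\<lambda>z. chi p A1 z * chi p A2 z * chi p A3 z * chi p A4 z) =
     (\<lambda>z. \<Prod>x\<in>UNIV. psi p A1 x (z x) * psi p A2 x (z x) * psi p A3 x (z x) * psi p A4 x (z x))"
    by (simp add: chi_prod[OF assms] psi_def prod.distrib)
  then show ?thesis
    using bern_prod[of p "\<lambda>x b. psi p A1 x b * psi p A2 x b * psi p A3 x b * psi p A4 x b"] by simp
qed

definition cnt :: "'a set \<Rightarrow> 'a set \<Rightarrow> 'a set \<Rightarrow> 'a set \<Rightarrow> 'a \<Rightarrow> nat" where
  "cnt A1 A2 A3 A4 x = (if x \<in> A1 then 1 else 0) + (if x \<in> A2 then 1 else 0)
     + (if x \<in> A3 then 1 else 0) + (if x \<in> A4 then 1 else 0)"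

lemma E4_zero:
  assumes "0 < p" "p < 1" "cnt A1 A2 A3 A4 x0 = 1"
  shows "bern_expect p (\<lambda>z. chi p A1 z * chi p A2 z * chi p A3 z * chi p A4 z) = 0"
proof -
  have "p * (psi p A1 x0 True * psi p A2 x0 True * psi p A3 x0 True * psi p A4 x0 True)
          + (1 - p) * (psi p A1 x0 False * psi p A2 x0 False * psi p A3 x0 False * psi p A4 x0 False) = 0"
    using assms(3) phi_mean[OF assms(1,2)] unfolding cnt_def psi_def
    by (auto split: if_splits)
  then show ?thesis unfolding E4_eq[OF assms(1,2)]
    by (intro prod_zero) auto
qed

lemma E_pow4:
  assumes "0 < p" "p < 1"
  shows "bern_expect p (\<lambda>z. chi p A z ^ 4) = M4 p ^ card A"
proof -
  have "(\<lambda>z. chi p A z ^ 4) = (\<lambda>z. \<Prod>x\<in>UNIV. (if x \<in> A then phi p (z x) else 1) ^ 4)"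
    by (simp add: chi_prod[OF assms] prod_power_distrib)
  then have "bern_expect p (\<lambda>z. chi p A z ^ 4) = (\<Prod>x\<in>UNIV. p * (if x \<in> A then phi p True else 1) ^ 4
     + (1 - p) * (if x \<in> A then phi p False else 1) ^ 4)"
    using bern_prod[of p "\<lambda>x b. (if x \<in> A then phi p b else 1) ^ 4"] by simp
  also have "\<dots> = (\<Prod>x\<in>UNIV. if x \<in> A then M4 p else 1)"
    by (rule prod.cong) (auto simp: M4_def)
  also have "\<dots> = M4 p ^ card A"
    by (simp add: prod.If_cases Int_def)
  finally show ?thesis .
qed

lemma two_mul_le:
  fixes x y :: real
  shows "\<bar>x * y\<bar> \<le> (x^2 + y^2) / 2"
proof -
  have "0 \<le> (\<bar>x\<bar> - \<bar>y\<bar>)^2" by simp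
  also have "(\<bar>x\<bar> - \<bar>y\<bar>)^2 = x^2 + y^2 - 2 * \<bar>x * y\<bar>"
    by (simp add: power2_eq_square algebra_simps abs_mult)
  finally show ?thesis by simp
qed

lemma amgm4:
  fixes a b c d :: real
  shows "\<bar>a * b * c * d\<bar> \<le> (a^4 + b^4 + c^4 + d^4) / 4"
proof -
  have "\<bar>a * b * c * d\<bar> = \<bar>a * b\<bar> * \<bar>c * d\<bar>" by (simp add: abs_mult)
  also have "\<dots> \<le> ((a^2 + b^2) / 2) * ((c^2 + d^2) / 2)"
    by (intro mult_mono two_mul_le) auto
  also have "\<dots> \<le> \<bar>((a^2 + b^2) / 2) * ((c^2 + d^2) / 2)\<bar>" by simp
  also have "\<dots> \<le> (((a^2 + b^2) / 2)^2 + ((c^2 + d^2) / 2)^2) / 2"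
    by (rule two_mul_le)
  also have "\<dots> \<le> (a^4 + b^4 + c^4 + d^4) / 4"
  proof -
    have ab: "((a^2 + b^2) / 2)^2 \<le> (a^4 + b^4) / 2"
    proof -
    have "\<bar>a^2 * b^2\<bar> \<le> ((a^2)^2 + (b^2)^2) / 2" by (rule two_mul_le)
    moreover have "((a^2 + b^2) / 2)^2 = (a^4 + b^4 + 2 * (a^2 * b^2)) / 4"
      by (simp add: power2_eq_square power4_eq_xxxx field_simps)
    moreover have "((a^2)^2 + (b^2)^2) = a^4 + b^4"
      by (simp add: power2_eq_square power4_eq_xxxx)
    moreover have "\<bar>a^2 * b^2\<bar> = a^2 * b^2" by (simp add: abs_mult)
    ultimately show ?thesis by simp
    qed
    have cd: "((c^2 + d^2) / 2)^2 \<le> (c^4 + d^4) / 2"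
    proof -
    have "\<bar>c^2 * d^2\<bar> \<le> ((c^2)^2 + (d^2)^2) / 2" by (rule two_mul_le)
    moreover have "((c^2 + d^2) / 2)^2 = (c^4 + d^4 + 2 * (c^2 * d^2)) / 4"
      by (simp add: power2_eq_square power4_eq_xxxx field_simps)
    moreover have "((c^2)^2 + (d^2)^2) = c^4 + d^4"
      by (simp add: power2_eq_square power4_eq_xxxx)
    moreover have "\<bar>c^2 * d^2\<bar> = c^2 * d^2" by (simp add: abs_mult)
    ultimately show ?thesis by simp
    qed
    show ?thesis using ab cd by simp
  qed
  finally show ?thesis .
qed


lemma E4_abs:
  assumes "0 < p" "p < 1" "card A1 = k" "card A2 = k" "card A3 = k" "card A4 = k"
  shows "\<bar>bern_expect p (\<lambda>z. chi p A1 z * chi p A2 z * chi p A3 z * chi p A4 (z::bit^'m::finite \<Rightarrow> bool))\<bar> \<le> M4 p ^ k"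
proof -
  let ?W = "\<lambda>z::bit^'m \<Rightarrow> bool. p ^ card {x. z x} * (1 - p) ^ (CARD(bit ^ 'm) - card {x. z x})"
  have W0: "\<And>z. 0 \<le> ?W z" using assms by (intro mult_nonneg_nonneg zero_le_power) auto
  have "\<bar>bern_expect p (\<lambda>z. chi p A1 z * chi p A2 z * chi p A3 z * chi p A4 z)\<bar>
      \<le> (\<Sum>z\<in>UNIV. \<bar>?W z * (chi p A1 z * chi p A2 z * chi p A3 z * chi p A4 z)\<bar>)"
    unfolding bern_expect_def by (simp add: mult.assoc sum_abs)
  also have "\<dots> \<le> (\<Sum>z\<in>UNIV. ?W z * ((chi p A1 z ^ 4 + chi p A2 z ^ 4 + chi p A3 z ^ 4 + chi p A4 z ^ 4) / 4))"
  proof (rule sum_mono)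
    fix z :: "bit^'m \<Rightarrow> bool"
    have "\<bar>?W z * (chi p A1 z * chi p A2 z * chi p A3 z * chi p A4 z)\<bar>
        = ?W z * \<bar>chi p A1 z * chi p A2 z * chi p A3 z * chi p A4 z\<bar>"
      by (metis abs_mult abs_of_nonneg W0)
    also have "\<dots> \<le> ?W z * ((chi p A1 z ^ 4 + chi p A2 z ^ 4 + chi p A3 z ^ 4 + chi p A4 z ^ 4) / 4)"
      by (intro mult_left_mono amgm4 W0)
    finally show "\<bar>?W z * (chi p A1 z * chi p A2 z * chi p A3 z * chi p A4 z)\<bar>
        \<le> ?W z * ((chi p A1 z ^ 4 + chi p A2 z ^ 4 + chi p A3 z ^ 4 + chi p A4 z ^ 4) / 4)" .
  qed
  also have "\<dots> = (bern_expect p (\<lambda>z. chi p A1 z ^ 4) + bern_expect p (\<lambda>z. chi p A2 z ^ 4)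
      + bern_expect p (\<lambda>z. chi p A3 z ^ 4) + bern_expect p (\<lambda>z. chi p A4 z ^ 4)) / 4"
    unfolding bern_expect_def by (simp add: sum_divide_distrib[symmetric] sum.distrib[symmetric] algebra_simps)
  also have "\<dots> = M4 p ^ k"
    using assms by (simp add: E_pow4)
  finally show ?thesis .
qed

lemma dim_Un_le:
  fixes A B :: "(bit ^ 'm::finite) set"
  shows "vec.dim (A \<union> B) \<le> vec.dim A + vec.dim B"
proof -
  obtain BA where BA: "BA \<subseteq> A" "vec.independent BA" "A \<subseteq> vec.span BA" "card BA = vec.dim A"
    using vec.basis_exists by blast
  obtain BB where BB: "BB \<subseteq> B" "vec.independent BB" "B \<subseteq> vec.span BB" "card BB = vec.dim B"
    using vec.basis_exists by blast
  have "A \<union> B \<subseteq> vec.span (BA \<union> BB)"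
    using BA(3) BB(3) vec.span_mono[of BA "BA \<union> BB"] vec.span_mono[of BB "BA \<union> BB"] by auto
  then have "vec.dim (A \<union> B) \<le> card (BA \<union> BB)" by (intro vec.dim_le_card) auto
  also have "\<dots> \<le> card BA + card BB" by (rule card_Un_le)
  finally show ?thesis using BA(4) BB(4) by simp
qed

definition good :: "'a set \<Rightarrow> 'a set \<Rightarrow> 'a set \<Rightarrow> 'a set \<Rightarrow> bool" where
  "good A1 A2 A3 A4 \<longleftrightarrow> (\<forall>x. cnt A1 A2 A3 A4 x \<noteq> 1)"

lemma dim_span_image:
  fixes S :: "(bit ^ 'm::finite) set"
  assumes "Vector_Spaces.linear (*s) (*s) \<pi>" "bij \<pi>"
  shows "vec.dim (vec.span (\<pi> ` S)) = vec.dim S"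
proof -
  have "inj_on \<pi> (vec.span S)" using assms(2) bij_is_inj inj_on_subset by blast
  then show ?thesis using vec.dim_image_eq[OF assms(1)] by simp
qed

lemma dim_union4:
  fixes S :: "(bit ^ 'm::finite) set"
  assumes l: "\<And>j. Vector_Spaces.linear (*s) (*s) (\<pi> j)" "\<And>j. bij (\<pi> j)"
    and A: "A1 = \<pi> 1 ` S" "A2 = \<pi> 2 ` S" "A3 = \<pi> 3 ` S" "A4 = \<pi> (4::nat) ` S"
    and g: "good A1 A2 A3 A4"
  shows "vec.dim (A1 \<union> A2 \<union> A3 \<union> A4) \<le> 2 * vec.dim S"
proof -
  define X1 where "X1 = vec.span A1"
  define X2 where "X2 = vec.span A2"
  define X3 where "X3 = vec.span A3"
  define X4 where "X4 = vec.span A4"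
  have dX: "vec.dim X1 = vec.dim S" "vec.dim X2 = vec.dim S" "vec.dim X3 = vec.dim S" "vec.dim X4 = vec.dim S"
    unfolding X1_def X2_def X3_def X4_def A using dim_span_image[OF l] by auto
  have sX: "vec.subspace X1" "vec.subspace X2" "vec.subspace X3" "vec.subspace X4"
    unfolding X1_def X2_def X3_def X4_def by (auto intro: vec.subspace_span)
  have AX: "A1 \<subseteq> X1" "A2 \<subseteq> X2" "A3 \<subseteq> X3" "A4 \<subseteq> X4"
    unfolding X1_def X2_def X3_def X4_def by (simp_all add: vec.span_superset)
  have zX: "0 \<in> X1" "0 \<in> X2" "0 \<in> X3" "0 \<in> X4"
    unfolding X1_def X2_def X3_def X4_def by (auto intro: vec.span_zero)
  define P where "P = {x + y |x y. x \<in> X1 \<and> y \<in> X2}"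
  define Q where "Q = {x + y |x y. x \<in> X3 \<and> y \<in> X4}"
  define PQ where "PQ = {x + y |x y. x \<in> P \<and> y \<in> Q}"
  have sP: "vec.subspace P" "vec.subspace Q" unfolding P_def Q_def using sX by (auto intro: vec.subspace_sums)
  have h1: "vec.dim P + vec.dim (X1 \<inter> X2) = vec.dim X1 + vec.dim X2"
    unfolding P_def using sX by (intro vec.dim_sums_Int)
  have h2: "vec.dim Q + vec.dim (X3 \<inter> X4) = vec.dim X3 + vec.dim X4"
    unfolding Q_def using sX by (intro vec.dim_sums_Int)
  have h3: "vec.dim PQ + vec.dim (P \<inter> Q) = vec.dim P + vec.dim Q"
    unfolding PQ_def using sP by (intro vec.dim_sums_Int)
  have A12P: "A1 \<union> A2 \<subseteq> P"
  proof
    fix a assume "a \<in> A1 \<union> A2"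
    then show "a \<in> P"
    proof
      assume "a \<in> A1" then have "a = a + 0 \<and> a \<in> X1 \<and> 0 \<in> X2" using AX zX by auto
      then show ?thesis unfolding P_def by blast
    next
      assume "a \<in> A2" then have "a = 0 + a \<and> 0 \<in> X1 \<and> a \<in> X2" using AX zX by auto
      then show ?thesis unfolding P_def by blast
    qed
  qed
  have A34Q: "A3 \<union> A4 \<subseteq> Q"
  proof
    fix a assume "a \<in> A3 \<union> A4"
    then show "a \<in> Q"
    proof
      assume "a \<in> A3" then have "a = a + 0 \<and> a \<in> X3 \<and> 0 \<in> X4" using AX zX by auto
      then show ?thesis unfolding Q_def by blast
    next
      assume "a \<in> A4" then have "a = 0 + a \<and> 0 \<in> X3 \<and> a \<in> X4" using AX zX by auto
      then show ?thesis unfolding Q_def by blast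
    qed
  qed
  have z0: "0 \<in> P" "0 \<in> Q" using sP by (auto intro: vec.subspace_0)
  have "P \<subseteq> PQ"
  proof
    fix a assume "a \<in> P" then have "a = a + 0 \<and> a \<in> P \<and> 0 \<in> Q" using z0 by auto
    then show "a \<in> PQ" unfolding PQ_def by blast
  qed
  moreover have "Q \<subseteq> PQ"
  proof
    fix a assume "a \<in> Q" then have "a = 0 + a \<and> 0 \<in> P \<and> a \<in> Q" using z0 by auto
    then show "a \<in> PQ" unfolding PQ_def by blast
  qed
  ultimately have "A1 \<union> A2 \<union> A3 \<union> A4 \<subseteq> PQ" using A12P A34Q by blast
  then have d1: "vec.dim (A1 \<union> A2 \<union> A3 \<union> A4) \<le> vec.dim PQ" by (rule vec.dim_subset)
  have "A1 \<union> A2 \<union> A3 \<union> A4 \<subseteq> (X1 \<inter> X2) \<union> (X3 \<inter> X4) \<union> (P \<inter> Q)"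
  proof
    fix a assume a: "a \<in> A1 \<union> A2 \<union> A3 \<union> A4"
    have c: "cnt A1 A2 A3 A4 a \<noteq> 1" using g unfolding good_def by blast
    show "a \<in> (X1 \<inter> X2) \<union> (X3 \<inter> X4) \<union> (P \<inter> Q)"
    proof (cases "a \<in> A1 \<union> A2 \<and> a \<in> A3 \<union> A4")
      case True then show ?thesis using A12P A34Q by blast
    next
      case False
      then have "(a \<in> A1 \<and> a \<in> A2) \<or> (a \<in> A3 \<and> a \<in> A4)"
        using a c unfolding cnt_def by (auto split: if_splits)
      then show ?thesis using AX by blast
    qed
  qed
  then have "vec.dim (A1 \<union> A2 \<union> A3 \<union> A4) \<le> vec.dim ((X1 \<inter> X2) \<union> (X3 \<inter> X4) \<union> (P \<inter> Q))"
    by (rule vec.dim_subset)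
  also have "\<dots> \<le> vec.dim (X1 \<inter> X2) + vec.dim (X3 \<inter> X4) + vec.dim (P \<inter> Q)"
    using dim_Un_le[of "(X1 \<inter> X2) \<union> (X3 \<inter> X4)" "P \<inter> Q"] dim_Un_le[of "X1 \<inter> X2" "X3 \<inter> X4"] by linarith
  finally show ?thesis using d1 h1 h2 h3 dX by linarith
qed


lemma span_rep:
  fixes w :: "'i \<Rightarrow> bit ^ 'm::finite"
  assumes "finite I" "v \<in> vec.span (w ` I)"
  shows "\<exists>c. v = (\<Sum>i\<in>I. c i *s w i)"
  using assms(2)
proof (induction rule: vec.span_induct_alt)
  case base
  show ?case by (rule exI[of _ "\<lambda>_. 0"]) simp
next
  case (step a x y)
  from step obtain k where k: "k \<in> I" "x = w k" by blast
  from step obtain c0 where c0: "y = (\<Sum>i\<in>I. c0 i *s w i)" by blast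
  let ?c = "c0(k := c0 k + a)"
  have "(\<Sum>i\<in>I. ?c i *s w i) = (\<Sum>i\<in>I. c0 i *s w i + (if i = k then a *s w i else 0))"
  proof (rule sum.cong[OF refl])
    fix i assume "i \<in> I"
    show "?c i *s w i = c0 i *s w i + (if i = k then a *s w i else 0)"
    proof (cases "i = k")
      case True
      then show ?thesis by (simp only: fun_upd_same vec.scale_left_distrib if_True refl simp_thms)
    next
      case False
      then show ?thesis by (simp only: fun_upd_other[OF False] if_not_P[OF False] add_0_right if_False simp_thms)
    qed
  qed
  also have "\<dots> = y + a *s x"
    using k assms(1) by (simp add: sum.distrib c0)
  finally show ?case by (intro exI[of _ ?c]) simp
qed

lemma span_rep_PiE:
  fixes w :: "'i \<Rightarrow> bit ^ 'm::finite"
  assumes "finite I" "v \<in> vec.span (w ` I)"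
  shows "\<exists>c\<in>I \<rightarrow>\<^sub>E UNIV. v = (\<Sum>i\<in>I. c i *s w i)"
proof -
  obtain c where c: "v = (\<Sum>i\<in>I. c i *s w i)" using span_rep[OF assms] by blast
  have "v = (\<Sum>i\<in>I. restrict c I i *s w i)" unfolding c by (rule sum.cong) auto
  moreover have "restrict c I \<in> I \<rightarrow>\<^sub>E UNIV" by simp
  ultimately show ?thesis by blast
qed

lemma card_span_le:
  fixes B :: "(bit ^ 'm::finite) set"
  shows "card (vec.span B) \<le> 2 ^ card B"
proof -
  have "vec.span B \<subseteq> (\<lambda>c. \<Sum>b\<in>B. c b *s id b) ` (B \<rightarrow>\<^sub>E UNIV)"
  proof
    fix v assume "v \<in> vec.span B"
    then have "v \<in> vec.span (id ` B)" by simp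
    then obtain c where "c \<in> B \<rightarrow>\<^sub>E UNIV" "v = (\<Sum>b\<in>B. c b *s id b)"
      using span_rep_PiE[of B v id] by auto
    then show "v \<in> (\<lambda>c. \<Sum>b\<in>B. c b *s id b) ` (B \<rightarrow>\<^sub>E UNIV)" by blast
  qed
  then have "card (vec.span B) \<le> card ((\<lambda>c. \<Sum>b\<in>B. c b *s id b) ` (B \<rightarrow>\<^sub>E (UNIV::bit set)))"
    by (intro card_mono) auto
  also have "\<dots> \<le> card (B \<rightarrow>\<^sub>E (UNIV::bit set))" by (rule card_image_le) (simp add: finite_PiE)
  also have "\<dots> = 2 ^ card B" by (simp add: card_PiE card_bit)
  finally show ?thesis .
qed

lemma enc_one:
  fixes S B :: "(bit ^ 'm::finite) set" and w :: "nat \<Rightarrow> bit ^ 'm"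
  assumes lin: "Vector_Spaces.linear (*s) (*s) \<pi>" and B: "vec.independent B" "S \<subseteq> vec.span B"
    and I: "finite I" and sp: "\<And>b. b \<in> B \<Longrightarrow> \<pi> b \<in> vec.span (w ` I)"
  shows "\<exists>c \<in> B \<rightarrow>\<^sub>E (I \<rightarrow>\<^sub>E UNIV). \<pi> ` S = vec.construct B (\<lambda>b. \<Sum>i\<in>I. c b i *s w i) ` S"
proof -
  have "\<forall>b\<in>B. \<exists>c\<in>I \<rightarrow>\<^sub>E UNIV. \<pi> b = (\<Sum>i\<in>I. c i *s w i)"
    using span_rep_PiE[OF I sp] by blast
  then obtain f where f: "\<And>b. b \<in> B \<Longrightarrow> f b \<in> I \<rightarrow>\<^sub>E UNIV \<and> \<pi> b = (\<Sum>i\<in>I. f b i *s w i)"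
    by metis
  define c where "c = restrict f B"
  have cB: "c \<in> B \<rightarrow>\<^sub>E (I \<rightarrow>\<^sub>E UNIV)" unfolding c_def using f by auto
  have "\<pi> ` S = vec.construct B (\<lambda>b. \<Sum>i\<in>I. c b i *s w i) ` S"
  proof (rule image_cong[OF refl])
    fix s assume "s \<in> S"
    then have s: "s \<in> vec.span B" using B by auto
    show "\<pi> s = vec.construct B (\<lambda>b. \<Sum>i\<in>I. c b i *s w i) s"
    proof (rule vec.linear_eq_on[OF lin vec.linear_construct[OF B(1)] s])
      fix b assume "b \<in> B"
      then show "\<pi> b = vec.construct B (\<lambda>b. \<Sum>i\<in>I. c b i *s w i) b"
        using f[of b] by (simp add: vec.construct_basis[OF B(1)] c_def)
    qed
  qed
  then show ?thesis using cB by blast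
qed


lemma orbit_GL_elem:
  assumes "A \<in> orbit_GL S"
  obtains \<pi> where "Vector_Spaces.linear (*s) (*s) \<pi>" "bij \<pi>" "A = \<pi> ` S"
  using assms unfolding orbit_GL_def by blast

lemma card_dom:
  fixes d m :: nat
  shows "((2::nat) ^ m) ^ (2 * d) * (((2::nat) ^ (2 * d)) ^ d) ^ 4 = 2 ^ (2 * d * m + 8 * d ^ 2)"
proof -
  have "((2::nat) ^ m) ^ (2 * d) = 2 ^ (2 * d * m)" by (simp add: power_mult[symmetric] mult.commute)
  moreover have "(((2::nat) ^ (2 * d)) ^ d) ^ 4 = 2 ^ (8 * d ^ 2)"
    by (simp add: power_mult[symmetric] power2_eq_square mult.commute mult.left_commute)
  ultimately show ?thesis by (simp add: power_add)
qed

lemma count_good: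
  fixes S :: "(bit ^ 'm::finite) set"
  shows "card {t \<in> orbit_GL S \<times> orbit_GL S \<times> orbit_GL S \<times> orbit_GL S.
            case t of (A1, A2, A3, A4) \<Rightarrow> good A1 A2 A3 A4}
         \<le> 2 ^ (2 * vec.dim S * CARD('m) + 8 * vec.dim S ^ 2)"
proof -
  define d where "d = vec.dim S"
  obtain B where B: "B \<subseteq> S" "vec.independent B" "S \<subseteq> vec.span B" "card B = d"
    using vec.basis_exists unfolding d_def by blast
  define I where "I = {..<2 * d}"
  define T where "T = (\<lambda>(w::nat \<Rightarrow> bit^'m) c. vec.construct B (\<lambda>b. \<Sum>i\<in>I. c b i *s w i) ` S)"
  define C where "C = B \<rightarrow>\<^sub>E (I \<rightarrow>\<^sub>E (UNIV :: bit set))"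
  define Dom where "Dom = (I \<rightarrow>\<^sub>E (UNIV :: (bit^'m) set)) \<times> C \<times> C \<times> C \<times> C"
  define \<Phi> where "\<Phi> = (\<lambda>(w, c1, c2, c3, c4). (T w c1, T w c2, T w c3, T w c4))"
  let ?G = "{t \<in> orbit_GL S \<times> orbit_GL S \<times> orbit_GL S \<times> orbit_GL S.
            case t of (A1, A2, A3, A4) \<Rightarrow> good A1 A2 A3 A4}"
  have sub: "?G \<subseteq> \<Phi> ` Dom"
  proof
    fix t assume t: "t \<in> ?G"
    obtain A1 A2 A3 A4 where tA: "t = (A1, A2, A3, A4)" by (cases t) auto
    from t tA have O: "A1 \<in> orbit_GL S" "A2 \<in> orbit_GL S" "A3 \<in> orbit_GL S" "A4 \<in> orbit_GL S"
      and g: "good A1 A2 A3 A4" by auto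
    obtain \<pi>1 where p1: "Vector_Spaces.linear (*s) (*s) \<pi>1" "bij \<pi>1" "A1 = \<pi>1 ` S"
      using O(1) by (rule orbit_GL_elem)
    obtain \<pi>2 where p2: "Vector_Spaces.linear (*s) (*s) \<pi>2" "bij \<pi>2" "A2 = \<pi>2 ` S"
      using O(2) by (rule orbit_GL_elem)
    obtain \<pi>3 where p3: "Vector_Spaces.linear (*s) (*s) \<pi>3" "bij \<pi>3" "A3 = \<pi>3 ` S"
      using O(3) by (rule orbit_GL_elem)
    obtain \<pi>4 where p4: "Vector_Spaces.linear (*s) (*s) \<pi>4" "bij \<pi>4" "A4 = \<pi>4 ` S"
      using O(4) by (rule orbit_GL_elem)
    define \<pi> where "\<pi> = (\<lambda>j::nat. if j = 1 then \<pi>1 else if j = 2 then \<pi>2 else if j = 3 then \<pi>3 else \<pi>4)"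
    have l1: "\<And>j. Vector_Spaces.linear (*s) (*s) (\<pi> j)" unfolding \<pi>_def using p1 p2 p3 p4 by simp
    have l2: "\<And>j. bij (\<pi> j)" unfolding \<pi>_def using p1 p2 p3 p4 by simp
    have eqs: "A1 = \<pi> 1 ` S" "A2 = \<pi> 2 ` S" "A3 = \<pi> 3 ` S" "A4 = \<pi> 4 ` S"
      unfolding \<pi>_def using p1(3) p2(3) p3(3) p4(3) by simp_all
    have dU: "vec.dim (A1 \<union> A2 \<union> A3 \<union> A4) \<le> 2 * d"
      unfolding d_def by (rule dim_union4[OF l1 l2 eqs g])
    define U where "U = A1 \<union> A2 \<union> A3 \<union> A4"
    obtain BU where BU: "BU \<subseteq> U" "vec.independent BU" "U \<subseteq> vec.span BU" "card BU = vec.dim U"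
      using vec.basis_exists by blast
    obtain xs where xs: "set xs = BU" "distinct xs"
      using finite_distinct_list[of BU] by auto
    have lxs: "length xs \<le> 2 * d" using xs dU BU(4) distinct_card[of xs] unfolding U_def by simp
    define w where "w = (\<lambda>i\<in>I. if i < length xs then xs ! i else 0)"
    have wD: "w \<in> I \<rightarrow>\<^sub>E UNIV" unfolding w_def by simp
    have "BU \<subseteq> w ` I"
    proof
      fix v assume "v \<in> BU"
      then obtain i where i: "i < length xs" "v = xs ! i" using xs by (auto simp: in_set_conv_nth)
      then have "i \<in> I" using lxs unfolding I_def by simp
      then have "w i = v" using i unfolding w_def by simp
      then show "v \<in> w ` I" using \<open>i \<in> I\<close> by blast
    qed
    then have "vec.span BU \<subseteq> vec.span (w ` I)" by (rule vec.span_mono)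
    then have Usp: "U \<subseteq> vec.span (w ` I)" using BU(3) by (rule_tac subset_trans) auto
    have fI: "finite I" unfolding I_def by simp
    have enc: "\<exists>c\<in>C. A = T w c" if hA: "A = \<sigma> ` S" "Vector_Spaces.linear (*s) (*s) \<sigma>" "A \<subseteq> U" for A \<sigma>
    proof -
      have "\<sigma> b \<in> vec.span (w ` I)" if "b \<in> B" for b
      proof -
        have "b \<in> S" using B(1) that by (rule subsetD)
        then have "\<sigma> b \<in> A" unfolding hA(1) by (rule imageI)
        then have "\<sigma> b \<in> U" by (rule subsetD[OF hA(3)])
        then show ?thesis by (rule subsetD[OF Usp])
      qed
      then have "\<exists>c \<in> C. \<sigma> ` S = vec.construct B (\<lambda>b. \<Sum>i\<in>I. c b i *s w i) ` S"
        unfolding C_def by (rule enc_one[OF hA(2) B(2,3) fI])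
      then obtain c where "c \<in> C" "\<sigma> ` S = vec.construct B (\<lambda>b. \<Sum>i\<in>I. c b i *s w i) ` S"
        by (rule bexE)
      then show ?thesis unfolding T_def using hA(1) by (intro bexI[of _ c]) simp_all
    qed
    obtain c1 where c1: "c1 \<in> C" "A1 = T w c1" using enc[OF p1(3) p1(1)] unfolding U_def by (meson Un_upper1 Un_upper2 subset_trans)
    obtain c2 where c2: "c2 \<in> C" "A2 = T w c2" using enc[OF p2(3) p2(1)] unfolding U_def by (meson Un_upper1 Un_upper2 subset_trans)
    obtain c3 where c3: "c3 \<in> C" "A3 = T w c3" using enc[OF p3(3) p3(1)] unfolding U_def by (meson Un_upper1 Un_upper2 subset_trans)
    obtain c4 where c4: "c4 \<in> C" "A4 = T w c4" using enc[OF p4(3) p4(1)] unfolding U_def by (meson Un_upper1 Un_upper2 subset_trans)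
    have "(w, c1, c2, c3, c4) \<in> Dom" unfolding Dom_def using wD c1 c2 c3 c4 by simp
    moreover have "t = \<Phi> (w, c1, c2, c3, c4)" unfolding \<Phi>_def tA using c1 c2 c3 c4 by simp
    ultimately show "t \<in> \<Phi> ` Dom" by blast
  qed
  have fD: "finite Dom" unfolding Dom_def C_def I_def by (simp add: finite_PiE)
  have "card ?G \<le> card (\<Phi> ` Dom)" by (intro card_mono sub) (simp add: fD)
  also have "\<dots> \<le> card Dom" using fD by (rule card_image_le)
  also have "card Dom = (2 ^ CARD('m)) ^ (2 * d) * ((2 ^ (2 * d)) ^ d) ^ 4"
  proof -
    have "card C = (2 ^ (2 * d)) ^ d" unfolding C_def I_def using B(4)
      by (simp add: card_PiE card_bit)
    moreover have "card (I \<rightarrow>\<^sub>E (UNIV :: (bit^'m) set)) = (2 ^ CARD('m)) ^ (2 * d)"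
      unfolding I_def by (simp add: card_PiE card_bit)
    ultimately show ?thesis unfolding Dom_def by (simp add: card_cartesian_product power4_eq_xxxx mult.assoc)
  qed
  also have "\<dots> = 2 ^ (2 * d * CARD('m) + 8 * d ^ 2)" by (rule card_dom)
  finally show ?thesis unfolding d_def .
qed


lemma bern_sum:
  assumes "finite T"
  shows "bern_expect p (\<lambda>z. \<Sum>t\<in>T. h t z) = (\<Sum>t\<in>T. bern_expect p (h t))"
  unfolding bern_expect_def by (simp add: sum_distrib_left sum.swap[of _ T])

lemma pow4_sum:
  fixes f :: "'b \<Rightarrow> real"
  assumes "finite Orb"
  shows "(\<Sum>A\<in>Orb. f A) ^ 4 = (\<Sum>t\<in>Orb \<times> Orb \<times> Orb \<times> Orb. case t of (A1, A2, A3, A4) \<Rightarrow> f A1 * f A2 * f A3 * f A4)"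
proof -
  have "(\<Sum>t\<in>Orb \<times> Orb \<times> Orb \<times> Orb. case t of (A1, A2, A3, A4) \<Rightarrow> f A1 * f A2 * f A3 * f A4)
      = (\<Sum>A1\<in>Orb. \<Sum>A2\<in>Orb. \<Sum>A3\<in>Orb. \<Sum>A4\<in>Orb. f A1 * f A2 * f A3 * f A4)"
    by (simp add: sum.cartesian_product)
  also have "\<dots> = (\<Sum>A\<in>Orb. f A) * (\<Sum>A\<in>Orb. f A) * (\<Sum>A\<in>Orb. f A) * (\<Sum>A\<in>Orb. f A)"
    by (simp add: sum_distrib_left sum_distrib_right mult_ac)
  finally show ?thesis by (simp add: power4_eq_xxxx)
qed

lemma card_S_le:
  fixes S :: "(bit ^ 'm::finite) set"
  shows "card S \<le> 2 ^ vec.dim S"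
proof -
  obtain B where B: "B \<subseteq> S" "vec.independent B" "S \<subseteq> vec.span B" "card B = vec.dim S"
    using vec.basis_exists by blast
  have "card S \<le> card (vec.span B)" using B(3) by (intro card_mono) auto
  also have "\<dots> \<le> 2 ^ card B" by (rule card_span_le)
  finally show ?thesis using B(4) by simp
qed

theorem lemma5:
  fixes S :: "(bit ^ 'm::finite) set" and eps :: real
  assumes "0 < eps" and "eps < 1/2"
  defines "d \<equiv> vec.dim S" and "m \<equiv> CARD('m)"
  shows "bern_expect eps (\<lambda>z. (chi_orbit eps S z) ^ 4)
           \<le> 2 ^ (2 * d * m + 8 * d ^ 2) * (1 / (eps * (1 - eps))) ^ (2 ^ d)"
proof -
  have p: "0 < eps" "eps < 1" using assms by auto
  define Orb where "Orb = orbit_GL S"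
  define K where "K = (1 / (eps * (1 - eps))) ^ (2 ^ d)"
  define h where "h = (\<lambda>t (z::bit^'m \<Rightarrow> bool). case t of (A1, A2, A3, A4) \<Rightarrow>
     chi eps A1 z * chi eps A2 z * chi eps A3 z * chi eps A4 z)"
  define G where "G = {t \<in> Orb \<times> Orb \<times> Orb \<times> Orb. case t of (A1, A2, A3, A4) \<Rightarrow> good A1 A2 A3 A4}"
  have fO: "finite Orb" by simp
  have K1: "1 \<le> 1 / (eps * (1 - eps))"
  proof -
    have "eps * (1 - eps) \<le> 1" using p by (simp add: mult_le_one)
    moreover have "0 < eps * (1 - eps)" using p by simp
    ultimately show ?thesis by simp
  qed
  have K0: "0 \<le> K" unfolding K_def using K1 by (intro zero_le_power) linarith
  have "(\<lambda>z. chi_orbit eps S z ^ 4) = (\<lambda>z. \<Sum>t\<in>Orb \<times> Orb \<times> Orb \<times> Orb. h t z)"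
    unfolding chi_orbit_def Orb_def h_def by (intro ext pow4_sum) simp
  then have "bern_expect eps (\<lambda>z. chi_orbit eps S z ^ 4) = (\<Sum>t\<in>Orb \<times> Orb \<times> Orb \<times> Orb. bern_expect eps (h t))"
    by (simp add: bern_sum)
  also have "\<dots> \<le> (\<Sum>t\<in>Orb \<times> Orb \<times> Orb \<times> Orb. if t \<in> G then K else 0)"
  proof (rule sum_mono)
    fix t assume t: "t \<in> Orb \<times> Orb \<times> Orb \<times> Orb"
    obtain A1 A2 A3 A4 where tA: "t = (A1, A2, A3, A4)" by (cases t) auto
    have mem: "A1 \<in> Orb" "A2 \<in> Orb" "A3 \<in> Orb" "A4 \<in> Orb" using t tA by auto
    have ht: "h t = (\<lambda>z. chi eps A1 z * chi eps A2 z * chi eps A3 z * chi eps A4 z)"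
      unfolding h_def tA by simp
    show "bern_expect eps (h t) \<le> (if t \<in> G then K else 0)"
    proof (cases "good A1 A2 A3 A4")
      case False
      then obtain x where "cnt A1 A2 A3 A4 x = 1" unfolding good_def by blast
      then have "bern_expect eps (h t) = 0" unfolding ht by (rule E4_zero[OF p])
      then show ?thesis using K0 by simp
    next
      case True
      then have tG: "t \<in> G" unfolding G_def using t tA by simp
      have cA: "card A = card S" if hO: "A \<in> Orb" for A
      proof -
        obtain \<pi> where "Vector_Spaces.linear (*s) (*s) \<pi>" "bij \<pi>" "A = \<pi> ` S"
          using hO unfolding Orb_def by (rule orbit_GL_elem)
        then show ?thesis by (metis card_image bij_is_inj inj_on_subset subset_UNIV)
      qed
      have "bern_expect eps (h t) \<le> \<bar>bern_expect eps (h t)\<bar>" by simp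
      also have "\<dots> \<le> M4 eps ^ card S" unfolding ht
        by (rule E4_abs[OF p cA[OF mem(1)] cA[OF mem(2)] cA[OF mem(3)] cA[OF mem(4)]])
      also have "\<dots> \<le> (1 / (eps * (1 - eps))) ^ card S"
        using M4_bound[OF p] by (intro power_mono) auto
      also have "\<dots> \<le> K" unfolding K_def d_def
        using K1 card_S_le[of S] by (intro power_increasing) auto
      finally show ?thesis using tG by simp
    qed
  qed
  also have "\<dots> = K * real (card G)"
  proof -
    have "G \<subseteq> Orb \<times> Orb \<times> Orb \<times> Orb" unfolding G_def by auto
    then have "(\<Sum>t\<in>Orb \<times> Orb \<times> Orb \<times> Orb. if t \<in> G then K else 0) = (\<Sum>t\<in>G. K)"
      by (simp add: sum.If_cases Int_absorb1)
    then show ?thesis by simp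
  qed
  also have "\<dots> \<le> K * real (2 ^ (2 * d * m + 8 * d ^ 2))"
  proof -
    have "card G \<le> 2 ^ (2 * d * m + 8 * d ^ 2)"
      unfolding G_def Orb_def d_def m_def by (rule count_good)
    then show ?thesis using K0 by (intro mult_left_mono) auto
  qed
  also have "\<dots> = 2 ^ (2 * d * m + 8 * d ^ 2) * (1 / (eps * (1 - eps))) ^ (2 ^ d)"
    unfolding K_def by simp
  finally show ?thesis .
qed

end
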